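(* Let $X$ be a finite discrete space with at least two elements, $\Gamma$ a nonempty countable set, $\varphi:\Gamma\to\Gamma$ a map. If $(X^\Gamma,\sigma_\varphi)$ is dense distributional chaotic, then $\varphi$ has no periodic point.
   Context: $X^\Gamma$ has the product topology and a fixed compatible metric $d$; $\sigma_\varphi((x_\alpha)_{\alpha\in\Gamma})=(x_{\varphi(\alpha)})_{\alpha\in\Gamma}$. With $f=\sigma_\varphi$, $\xi(x,y,t,n)=\#\{i\in\{0,\dots,n-1\}:d(f^i(x),f^i(y))<t\}$, $F_{xy}(t)=\liminf_n\xi(x,y,t,n)/n$, $F^*_{xy}(t)=\limsup_n\xi(x,y,t,n)/n$. The system is dense distributional chaotic if there exist a dense uncountable set $A\subseteq X^\Gamma$ and $\varepsilon>0$ such that for all distinct $x,y\in A$: $F^*_{xy}(s)=1$ for every $s>0$ and $F_{xy}(\varepsilon)=0$. *)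

theory Defs
  imports "HOL-Analysis.Analysis"
begin

definition gshift :: "'b set \<Rightarrow> ('b \<Rightarrow> 'b) \<Rightarrow> ('b \<Rightarrow> 'a) \<Rightarrow> ('b \<Rightarrow> 'a)" where
  "gshift \<Gamma> \<phi> x = (\<lambda>\<alpha>\<in>\<Gamma>. x (\<phi> \<alpha>))"

definition xi :: "('c \<Rightarrow> 'c \<Rightarrow> real) \<Rightarrow> ('c \<Rightarrow> 'c) \<Rightarrow> 'c \<Rightarrow> 'c \<Rightarrow> real \<Rightarrow> nat \<Rightarrow> nat" where
  "xi d f x y t n = card {i. i < n \<and> d ((f ^^ i) x) ((f ^^ i) y) < t}"

definition F_lower :: "('c \<Rightarrow> 'c \<Rightarrow> real) \<Rightarrow> ('c \<Rightarrow> 'c) \<Rightarrow> 'c \<Rightarrow> 'c \<Rightarrow> real \<Rightarrow> ereal" where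
  "F_lower d f x y t = liminf (\<lambda>n. ereal (real (xi d f x y t n) / real n))"

definition F_upper :: "('c \<Rightarrow> 'c \<Rightarrow> real) \<Rightarrow> ('c \<Rightarrow> 'c) \<Rightarrow> 'c \<Rightarrow> 'c \<Rightarrow> real \<Rightarrow> ereal" where
  "F_upper d f x y t = limsup (\<lambda>n. ereal (real (xi d f x y t n) / real n))"

definition dense_distributional_chaotic ::
  "'c topology \<Rightarrow> ('c \<Rightarrow> 'c \<Rightarrow> real) \<Rightarrow> ('c \<Rightarrow> 'c) \<Rightarrow> bool" where
  "dense_distributional_chaotic T d f \<longleftrightarrow>
     (\<exists>A \<epsilon>. A \<subseteq> topspace T \<and> T closure_of A = topspace T \<and> uncountable A \<and> \<epsilon> > 0 \<and>
        (\<forall>x\<in>A. \<forall>y\<in>A. x \<noteq> y \<longrightarrow>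
           (\<forall>s>0. F_upper d f x y s = 1) \<and> F_lower d f x y \<epsilon> = 0))"

definition has_periodic_point :: "'b set \<Rightarrow> ('b \<Rightarrow> 'b) \<Rightarrow> bool" where
  "has_periodic_point \<Gamma> \<phi> \<longleftrightarrow> (\<exists>\<alpha>\<in>\<Gamma>. \<exists>n>0. (\<phi> ^^ n) \<alpha> = \<alpha>)"

end

theory Submission
  imports Defs
begin

lemma count_mult:
  assumes "n > (0::nat)"
  shows "N \<le> n * card {i. i < N \<and> n dvd i}"
proof -
  define K where "K = {k. k*n < N}"
  have "k < N" if "k*n < N" for k
  proof -
    have "k * 1 \<le> k * n" using assms by (intro mult_le_mono2) simp
    then have "k \<le> k * n" by simp
    then show ?thesis using that by (rule le_less_trans)
  qed
  then have "K \<subseteq> {..<N}" unfolding K_def by blast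
  then have fK: "finite K" by (rule finite_subset) simp
  have "{..<N} \<subseteq> (\<Union>k\<in>K. {k*n..<k*n+n})"
  proof
    fix i assume "i \<in> {..<N}"
    have e: "i = (i div n)*n + i mod n" by simp
    have m: "i mod n < n" using assms by simp
    have le: "(i div n)*n \<le> i" by (rule div_times_less_eq_dividend)
    have iN: "i < N" using \<open>i \<in> {..<N}\<close> by simp
    have "(i div n)*n < N" using le iN by (rule le_less_trans)
    moreover have "i < (i div n)*n + n" using e m by linarith
    then have "i \<in> {(i div n)*n..<(i div n)*n+n}" using le by simp
    ultimately have "(i div n)*n < N" "i \<in> {(i div n)*n..<(i div n)*n+n}" by auto
    then show "i \<in> (\<Union>k\<in>K. {k*n..<k*n+n})" unfolding K_def by blast
  qed
  then have "card {..<N} \<le> card (\<Union>k\<in>K. {k*n..<k*n+n})"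
    using fK by (intro card_mono) auto
  also have "\<dots> \<le> (\<Sum>k\<in>K. card {k*n..<k*n+n})" by (rule card_UN_le[OF fK])
  also have "\<dots> = n * card K" by simp
  also have "card K = card ((\<lambda>k. k*n) ` K)"
    using assms by (intro card_image[symmetric]) (auto simp: inj_on_def)
  also have "(\<lambda>k. k*n) ` K = {i. i < N \<and> n dvd i}"
  proof
    show "(\<lambda>k. k*n) ` K \<subseteq> {i. i < N \<and> n dvd i}" unfolding K_def by auto
    show "{i. i < N \<and> n dvd i} \<subseteq> (\<lambda>k. k*n) ` K"
    proof
      fix i assume "i \<in> {i. i < N \<and> n dvd i}"
      then have iN: "i < N" and nd: "n dvd i" by auto
      from nd obtain k where "i = n*k" by (rule dvdE)
      then have "i = k*n" by simp
      then show "i \<in> (\<lambda>k. k*n) ` K" using iN unfolding K_def by blast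
    qed
  qed
  finally show ?thesis by simp
qed

lemma gshift_iter:
  assumes "\<phi> \<in> \<Gamma> \<rightarrow> \<Gamma>" "\<beta> \<in> \<Gamma>"
  shows "(gshift \<Gamma> \<phi> ^^ i) x \<beta> = x ((\<phi> ^^ i) \<beta>)"
  using assms(2)
proof (induction i arbitrary: x \<beta>)
  case 0 then show ?case by simp
next
  case (Suc i)
  have "(gshift \<Gamma> \<phi> ^^ Suc i) x \<beta> = (gshift \<Gamma> \<phi> ^^ i) (gshift \<Gamma> \<phi> x) \<beta>"
    by (simp add: funpow_Suc_right del: funpow.simps)
  also have "\<dots> = gshift \<Gamma> \<phi> x ((\<phi> ^^ i) \<beta>)" using Suc by blast
  also have "\<dots> = x (\<phi> ((\<phi> ^^ i) \<beta>))"
  proof -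
    have "(\<phi> ^^ i) \<beta> \<in> \<Gamma>" using Suc.prems assms(1) by (induction i) auto
    then show ?thesis by (simp add: gshift_def)
  qed
  finally show ?case by simp
qed

lemma gshift_iter_in:
  assumes "\<phi> \<in> \<Gamma> \<rightarrow> \<Gamma>" "x \<in> PiE \<Gamma> (\<lambda>_. X)"
  shows "(gshift \<Gamma> \<phi> ^^ i) x \<in> PiE \<Gamma> (\<lambda>_. X)"
  using assms(2)
proof (induction i)
  case 0 then show ?case by simp
next
  case (Suc i)
  then show ?case using assms(1) unfolding gshift_def by (auto simp: PiE_iff extensional_def)
qed

theorem lemma4p1:
  fixes X :: "'a set" and \<Gamma> :: "'b set" and \<phi> :: "'b \<Rightarrow> 'b"
    and d :: "('b \<Rightarrow> 'a) \<Rightarrow> ('b \<Rightarrow> 'a) \<Rightarrow> real"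
  assumes "finite X" and "card X \<ge> 2"
    and "\<Gamma> \<noteq> {}" and "countable \<Gamma>"
    and "\<phi> \<in> \<Gamma> \<rightarrow> \<Gamma>"
    and "Metric_space (PiE \<Gamma> (\<lambda>_. X)) d"
    and "Metric_space.mtopology (PiE \<Gamma> (\<lambda>_. X)) d
           = product_topology (\<lambda>_. discrete_topology X) \<Gamma>"
    and "dense_distributional_chaotic
           (product_topology (\<lambda>_. discrete_topology X) \<Gamma>) d (gshift \<Gamma> \<phi>)"
  shows "\<not> has_periodic_point \<Gamma> \<phi>"
proof
  assume "has_periodic_point \<Gamma> \<phi>"
  then obtain \<alpha> n where \<alpha>: "\<alpha> \<in> \<Gamma>" and n: "n > 0" "(\<phi> ^^ n) \<alpha> = \<alpha>"
    unfolding has_periodic_point_def by blast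
  define M where "M = PiE \<Gamma> (\<lambda>_. X)"
  define T where "T = product_topology (\<lambda>_. discrete_topology X) \<Gamma>"
  define f :: "('b \<Rightarrow> 'a) \<Rightarrow> ('b \<Rightarrow> 'a)" where "f = gshift \<Gamma> \<phi>"
  have topT: "topspace T = M" unfolding T_def M_def by simp
  obtain A \<epsilon> where A: "A \<subseteq> M" "T closure_of A = M"
    and ch: "\<And>x y. x\<in>A \<Longrightarrow> y\<in>A \<Longrightarrow> x \<noteq> y \<Longrightarrow> (\<forall>s>0. F_upper d f x y s = 1)"
    using assms(8) topT unfolding dense_distributional_chaotic_def T_def f_def by metis
  obtain a b where ab: "a \<in> X" "b \<in> X" "a \<noteq> b"
  proof -
    obtain B where "B \<subseteq> X" "card B = 2" using assms(2) by (meson obtain_subset_with_card_n)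
    then show ?thesis using that by (auto simp: card_2_iff)
  qed
  define U where "U c = {z \<in> M. z \<alpha> = c}" for c
  have openU: "openin T (U c)" for c
  proof -
    have "openin T {z \<in> topspace T. z \<alpha> \<in> {c} \<inter> X}"
      unfolding T_def
      by (rule openin_continuous_map_preimage[OF continuous_map_product_projection[OF \<alpha>]]) simp
    moreover have "{z \<in> topspace T. z \<alpha> \<in> {c} \<inter> X} = U c"
      unfolding U_def topT M_def using \<alpha> by (auto simp: PiE_iff)
    ultimately show ?thesis by simp
  qed
  have inU: "(\<lambda>\<beta>\<in>\<Gamma>. c) \<in> U c" if "c \<in> X" for c
    using that \<alpha> unfolding U_def M_def by auto
  have "\<exists>x. x \<in> A \<and> x \<in> U c" if "c \<in> X" for c
  proof -
    have "(\<lambda>\<beta>\<in>\<Gamma>. c) \<in> T closure_of A" using A(2) inU[OF that] unfolding U_def by auto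
    then show ?thesis using openU inU[OF that] unfolding in_closure_of by blast
  qed
  then obtain x y where xy: "x \<in> A" "y \<in> A" "x \<alpha> = a" "y \<alpha> = b"
    using ab unfolding U_def by blast
  have xyne: "x \<noteq> y" using xy ab by auto
  interpret Metric_space M d using assms(6) unfolding M_def .
  have mt: "mtopology = T" using assms(7) unfolding M_def T_def .
  have "compact_space T" unfolding T_def
    using assms(1) by (simp add: compact_space_product_topology compact_space_discrete_topology)
  then have cM: "compactin mtopology M" using mt topT by (simp add: compact_space_def)
  obtain \<delta> where \<delta>: "\<delta> > 0" "\<forall>z \<in> M. \<exists>V \<in> U ` X. mball z \<delta> \<subseteq> V"
  proof -
    have "M \<subseteq> \<Union>(U ` X)"
    proof
      fix z assume z: "z \<in> M"
      then have zX: "z \<alpha> \<in> X" using \<alpha> unfolding M_def by (rule PiE_mem)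
      have "z \<in> U (z \<alpha>)" using z unfolding U_def by simp
      then show "z \<in> \<Union>(U ` X)" using zX by blast
    qed
    moreover have op: "openin mtopology V" if V: "V \<in> U ` X" for V
    proof -
      obtain c where "V = U c" using V by blast
      then show ?thesis using openU[of c] mt by simp
    qed
    ultimately have "\<exists>\<epsilon>>0. \<forall>z\<in>M. \<exists>V\<in>U ` X. mball z \<epsilon> \<subseteq> V"
      by (rule lebesgue_number[OF cM])
    then obtain e where "e > 0" "\<forall>z\<in>M. \<exists>V\<in>U ` X. mball z e \<subseteq> V" by blast
    then show ?thesis by (rule that)
  qed
  have close: "z \<alpha> = w \<alpha>" if "z \<in> M" "w \<in> M" "d z w < \<delta>" for z w
  proof -
    have "\<exists>V\<in>U ` X. mball z \<delta> \<subseteq> V" using \<delta>(2) that(1) by (rule bspec)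
    then obtain V where V: "V \<in> U ` X" "mball z \<delta> \<subseteq> V" by (rule bexE)
    obtain c where "V = U c" using V(1) by (rule imageE)
    then have "mball z \<delta> \<subseteq> U c" using V(2) by simp
    moreover have "z \<in> mball z \<delta>" using that(1) \<delta>(1) by simp
    moreover have "w \<in> mball z \<delta>" using that by simp
    ultimately have "z \<in> U c" "w \<in> U c" by blast+
    then show ?thesis unfolding U_def by simp
  qed
  have xM: "x \<in> M" and yM: "y \<in> M" using xy A by auto
  have per: "(\<phi> ^^ (k*n)) \<alpha> = \<alpha>" for k
  proof (induction k)
    case 0 then show ?case by simp
  next
    case (Suc k)
    have e: "Suc k * n = k*n + n" by simp
    have "(\<phi> ^^ (Suc k * n)) \<alpha> = (\<phi> ^^ (k*n)) ((\<phi> ^^ n) \<alpha>)"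
      unfolding e funpow_add o_apply ..
    then show ?case using Suc n by simp
  qed
  have far: "\<not> d ((f ^^ i) x) ((f ^^ i) y) < \<delta>" if ndvd: "n dvd i" for i
  proof
    assume h: "d ((f ^^ i) x) ((f ^^ i) y) < \<delta>"
    obtain k where i: "i = n*k" using ndvd by (rule dvdE)
    have "(f ^^ i) x \<in> M" "(f ^^ i) y \<in> M"
      using gshift_iter_in[OF assms(5)] xM yM unfolding f_def M_def by blast+
    then have "(f ^^ i) x \<alpha> = (f ^^ i) y \<alpha>" using h by (rule close)
    moreover have "(f ^^ i) x \<alpha> = x ((\<phi> ^^ i) \<alpha>)" "(f ^^ i) y \<alpha> = y ((\<phi> ^^ i) \<alpha>)"
      unfolding f_def by (rule gshift_iter[OF assms(5) \<alpha>])+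
    moreover have "(\<phi> ^^ i) \<alpha> = \<alpha>" using per[of k] unfolding i by (simp add: mult.commute)
    ultimately show False using ab xy by simp
  qed
  have bound: "real (xi d f x y \<delta> N) / real N \<le> 1 - 1 / real n" for N
  proof (cases "N = 0")
    case True then show ?thesis using n by simp
  next
    case False
    let ?G = "{i. i < N \<and> d ((f ^^ i) x) ((f ^^ i) y) < \<delta>}"
    let ?B = "{i. i < N \<and> n dvd i}"
    have "?G \<subseteq> {..<N} - ?B"
    proof
      fix i assume "i \<in> ?G"
      then show "i \<in> {..<N} - ?B" using far[of i] by auto
    qed
    then have "card ?G \<le> card ({..<N} - ?B)" by (intro card_mono) auto
    also have "\<dots> = N - card ?B" by (subst card_Diff_subset) auto
    finally have c1: "card ?G \<le> N - card ?B" .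
    have c2: "N \<le> n * card ?B" by (rule count_mult[OF n(1)])
    have "?B \<subseteq> {..<N}" by auto
    then have "card ?B \<le> card {..<N}" by (rule card_mono[rotated]) simp
    then have cB: "card ?B \<le> N" by simp
    have "real (card ?G) \<le> real N - real (card ?B)" using c1 cB by linarith
    moreover have "real N \<le> real n * real (card ?B)" using c2 by (simp flip: of_nat_mult)
    ultimately have "real (card ?G) * real n \<le> real N * real n - real N"
    proof -
      assume a1: "real (card ?G) \<le> real N - real (card ?B)" and a2: "real N \<le> real n * real (card ?B)"
      have "real (card ?G) * real n \<le> (real N - real (card ?B)) * real n"
        using a1 by (intro mult_right_mono) auto
      then show ?thesis using a2 by (simp add: algebra_simps)
    qed
    then have "real (card ?G) \<le> (real N * real n - real N) / real n"
      using n by (simp add: pos_le_divide_eq)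
    also have "\<dots> = (1 - 1 / real n) * real N" using n by (simp add: diff_divide_distrib left_diff_distrib)
    finally have "real (card ?G) \<le> (1 - 1 / real n) * real N" .
    then have "real (card ?G) / real N \<le> 1 - 1 / real n"
      using False by (simp add: pos_divide_le_eq)
    then show ?thesis unfolding xi_def .
  qed
  have "F_upper d f x y \<delta> \<le> ereal (1 - 1 / real n)"
    unfolding F_upper_def by (rule Limsup_bounded) (use bound in auto)
  moreover have "F_upper d f x y \<delta> = 1" using ch[OF xy(1,2) xyne] \<delta> by blast
  ultimately show False using n by (simp add: one_ereal_def)
qed

end
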